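(* Let $q(x)\in\mathbb{Z}[i][x]$ be an intersective polynomial of degree $d$, with fixed roots $z_{\mathfrak p}=(s_{\mathfrak p^n})_{n\ge1}\in\mathbb{Z}[i]_{\mathfrak p}$ of multiplicity $m_{\mathfrak p}$ for each nonzero prime ideal $\mathfrak p$. Let $\mathfrak a$ be a nonzero proper ideal of $\mathbb{Z}[i]$ with generator $\alpha$, let $\gamma$ be a generator of $\lambda_q(\mathfrak a)$, and let $r_{\mathfrak a}\in\mathbb{Z}[i]$ satisfy: $|r_{\mathfrak a}|\le 2|\alpha|$, $q(r_{\mathfrak a})\in\mathfrak a$, and $r_{\mathfrak a}\equiv s_{\mathfrak p^n}\pmod{\mathfrak p^n}$ whenever $\mathfrak a\subseteq\mathfrak p^n$. Then all coefficients of $q(r_{\mathfrak a}+\alpha x)$ lie in $\lambda_q(\mathfrak a)$, and the polynomial $q_{\mathfrak a}(x) := q(r_{\mathfrak a}+\alpha x)/\gamma\in\mathbb{Z}[i][x]$ is an intersective polynomial of degree $d$ satisfying $M_{q_{\mathfrak a}}\le 2^{2d}|\alpha|^{d-1}M_q$.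
   Context: A polynomial $h(x)\in\mathbb{Z}[i][x]$ is intersective if for every nonzero $\alpha\in\mathbb{Z}[i]$ there is $z\in\mathbb{Z}[i]$ with $\alpha\mid h(z)$; equivalently, $h$ has a root in $\mathbb{Z}[i]_{\mathfrak p}$ for every nonzero prime ideal $\mathfrak p$. Here $\mathbb{Z}[i]_{\mathfrak p} := \varprojlim_n \mathbb{Z}[i]/\mathfrak p^n$, elements written as compatible sequences $(s_{\mathfrak p^n})_{n\ge1}$. Let $\widetilde J$ be the set of nonzero proper ideals of $\mathbb{Z}[i]$; $\lambda_q:\widetilde J\to\widetilde J$ is the completely multiplicative map with $\lambda_q(\mathfrak p) = \mathfrak p^{m_{\mathfrak p}}$ for each nonzero prime ideal $\mathfrak p$, where $m_{\mathfrak p}$ is the multiplicity of the fixed root $z_{\mathfrak p}$. For $p(x)=a_dx^d+\dots+a_0\in\mathbb{C}[x]$ with $a_d\ne0$, $M_p := 2\max\{|a_0|,\dots,|a_d|\}$. *)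

theory Defs
  imports "HOL-Computational_Algebra.Polynomial" Complex_Main
begin

definition ZI :: "complex set" where
  "ZI = {z. Re z \<in> \<int> \<and> Im z \<in> \<int>}"

definition gdvd :: "complex \<Rightarrow> complex \<Rightarrow> bool" where
  "gdvd a b \<longleftrightarrow> (\<exists>c\<in>ZI. b = a * c)"

definition gideal :: "complex set \<Rightarrow> bool" where
  "gideal I \<longleftrightarrow> I \<subseteq> ZI \<and> 0 \<in> I \<and> (\<forall>x\<in>I. \<forall>y\<in>I. x + y \<in> I)
      \<and> (\<forall>x\<in>I. \<forall>r\<in>ZI. r * x \<in> I)"

definition principal :: "complex \<Rightarrow> complex set" where
  "principal a = {a * x | x. x \<in> ZI}"

definition ideal_gen :: "complex set \<Rightarrow> complex set" where
  "ideal_gen S = \<Inter>{I. gideal I \<and> S \<subseteq> I}"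

definition ideal_mult :: "complex set \<Rightarrow> complex set \<Rightarrow> complex set" where
  "ideal_mult I J = ideal_gen {a * b | a b. a \<in> I \<and> b \<in> J}"

primrec ideal_pow :: "complex set \<Rightarrow> nat \<Rightarrow> complex set" where
  "ideal_pow I 0 = ZI"
| "ideal_pow I (Suc n) = ideal_mult I (ideal_pow I n)"

definition nzp_ideal :: "complex set \<Rightarrow> bool" where
  "nzp_ideal I \<longleftrightarrow> gideal I \<and> I \<noteq> {0} \<and> I \<noteq> ZI"

definition nz_prime_ideal :: "complex set \<Rightarrow> bool" where
  "nz_prime_ideal P \<longleftrightarrow> nzp_ideal P \<and> (\<forall>a\<in>ZI. \<forall>b\<in>ZI. a * b \<in> P \<longrightarrow> a \<in> P \<or> b \<in> P)"

definition ZI_poly :: "complex poly \<Rightarrow> bool" where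
  "ZI_poly h \<longleftrightarrow> (\<forall>k. coeff h k \<in> ZI)"

definition intersective :: "complex poly \<Rightarrow> bool" where
  "intersective h \<longleftrightarrow> ZI_poly h \<and>
     (\<forall>a\<in>ZI. a \<noteq> 0 \<longrightarrow> (\<exists>z\<in>ZI. gdvd a (poly h z)))"

text \<open>An element of the completion Z[i]_P, given as a sequence s of representatives
  (s n represents the component in Z[i]/P^n, n \<ge> 1), compatible.\<close>
definition padic_elem :: "complex set \<Rightarrow> (nat \<Rightarrow> complex) \<Rightarrow> bool" where
  "padic_elem P s \<longleftrightarrow> (\<forall>n\<ge>1. s n \<in> ZI) \<and>
     (\<forall>n\<ge>1. s (Suc n) - s n \<in> ideal_pow P n)"

definition padic_root :: "complex poly \<Rightarrow> complex set \<Rightarrow> (nat \<Rightarrow> complex) \<Rightarrow> bool" where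
  "padic_root h P s \<longleftrightarrow> padic_elem P s \<and> (\<forall>n\<ge>1. poly h (s n) \<in> ideal_pow P n)"

text \<open>Multiplicity of the root z = (s n) in Z[i]_P: the least k such that the k-th Taylor
  coefficient of h at z (coefficient of (x - z)^k in h) is nonzero in Z[i]_P. Its image in
  Z[i]/P^n is the k-th coefficient of h(x + s n).\<close>
definition root_mult :: "complex poly \<Rightarrow> complex set \<Rightarrow> (nat \<Rightarrow> complex) \<Rightarrow> nat" where
  "root_mult h P s = (LEAST k. \<not> (\<forall>n\<ge>1. coeff (pcompose h [:s n, 1:]) k \<in> ideal_pow P n))"

definition Mp :: "complex poly \<Rightarrow> real" where
  "Mp p = 2 * Max ((\<lambda>i. cmod (coeff p i)) ` {..degree p})"

end

theory Submission
  imports Defs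
begin


lemma ZI_iff: "z \<in> ZI \<longleftrightarrow> (\<exists>a b::int. z = Complex (of_int a) (of_int b))"
  unfolding ZI_def by (auto elim!: Ints_cases simp: complex_eq_iff)

lemma ZI_0[simp]: "0 \<in> ZI" and ZI_1[simp]: "1 \<in> ZI"
  by (auto simp: ZI_def)

lemma ZI_add[simp]: "a \<in> ZI \<Longrightarrow> b \<in> ZI \<Longrightarrow> a + b \<in> ZI"
  and ZI_diff[simp]: "a \<in> ZI \<Longrightarrow> b \<in> ZI \<Longrightarrow> a - b \<in> ZI"
  and ZI_uminus[simp]: "a \<in> ZI \<Longrightarrow> - a \<in> ZI"
  and ZI_mult[simp]: "a \<in> ZI \<Longrightarrow> b \<in> ZI \<Longrightarrow> a * b \<in> ZI"
  and ZI_cnj[simp]: "a \<in> ZI \<Longrightarrow> cnj a \<in> ZI"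
  by (auto simp: ZI_def)

lemma ZI_of_nat[simp]: "of_nat n \<in> ZI" and ZI_of_int[simp]: "of_int k \<in> ZI"
  by (auto simp: ZI_def)

lemma ZI_power[simp]: "a \<in> ZI \<Longrightarrow> a ^ n \<in> ZI"
  by (induction n) auto

lemma ZI_sum[simp]: "(\<And>x. x \<in> S \<Longrightarrow> f x \<in> ZI) \<Longrightarrow> sum f S \<in> ZI"
  by (induction S rule: infinite_finite_induct) auto

lemma ZI_norm_int: "z \<in> ZI \<Longrightarrow> (cmod z)^2 \<in> \<int>"
  unfolding ZI_def by (auto simp: cmod_power2)

lemma ZI_norm_ge1: "z \<in> ZI \<Longrightarrow> z \<noteq> 0 \<Longrightarrow> cmod z \<ge> 1"
proof -
  assume z: "z \<in> ZI" "z \<noteq> 0"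
  then obtain a b :: int where ab: "z = Complex a b" by (auto simp: ZI_iff)
  with z have "a \<noteq> 0 \<or> b \<noteq> 0" by (auto simp: complex_eq_iff)
  hence "(1::real) \<le> a^2 + b^2"
    by (metis add.commute add_increasing not_sum_power2_lt_zero of_int_1_le_iff of_int_add of_int_power zero_le_power2 zero_less_power2 int_one_le_iff_zero_less)
  hence "1 \<le> (cmod z)^2" by (simp add: ab cmod_power2)
  thus ?thesis by (metis abs_norm_cancel one_le_power abs_le_square_iff power_one abs_one)
qed

definition gn :: "complex \<Rightarrow> nat" where
  "gn z = nat \<lfloor>(cmod z)^2\<rfloor>"

lemma gn_real: "z \<in> ZI \<Longrightarrow> real (gn z) = (cmod z)^2"
  using ZI_norm_int[of z] unfolding gn_def by (auto elim!: Ints_cases)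

lemma gn_less: "a \<in> ZI \<Longrightarrow> b \<in> ZI \<Longrightarrow> cmod a < cmod b \<Longrightarrow> gn a < gn b"
proof -
  assume "a \<in> ZI" "b \<in> ZI" "cmod a < cmod b"
  hence "real (gn a) < real (gn b)" by (simp add: gn_real power_strict_mono)
  thus ?thesis by simp
qed

lemma gdvd_refl[simp]: "gdvd a a" unfolding gdvd_def by (auto intro: bexI[of _ 1])
lemma gdvd_0[simp]: "gdvd a 0" unfolding gdvd_def by (auto intro: bexI[of _ 0])
lemma one_gdvd[simp]: "gdvd 1 a \<longleftrightarrow> a \<in> ZI" unfolding gdvd_def by auto
lemma gdvd_trans: "gdvd a b \<Longrightarrow> gdvd b c \<Longrightarrow> gdvd a c"
  unfolding gdvd_def by (metis ZI_mult mult.assoc)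
lemma gdvd_ZI: "a \<in> ZI \<Longrightarrow> gdvd a b \<Longrightarrow> b \<in> ZI"
  unfolding gdvd_def by auto
lemma gdvd_add[intro]: "gdvd a b \<Longrightarrow> gdvd a c \<Longrightarrow> gdvd a (b + c)"
  unfolding gdvd_def by (metis ZI_add distrib_left)
lemma gdvd_diff[intro]: "gdvd a b \<Longrightarrow> gdvd a c \<Longrightarrow> gdvd a (b - c)"
  unfolding gdvd_def by (metis ZI_diff right_diff_distrib)
lemma gdvd_multR[intro]: "gdvd a b \<Longrightarrow> x \<in> ZI \<Longrightarrow> gdvd a (b * x)"
  unfolding gdvd_def by (metis ZI_mult mult.assoc)
lemma gdvd_multL[intro]: "gdvd a b \<Longrightarrow> x \<in> ZI \<Longrightarrow> gdvd a (x * b)"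
  using gdvd_multR by (metis mult.commute)
lemma gdvd_mult_self[intro]: "x \<in> ZI \<Longrightarrow> gdvd a (a * x)"
  unfolding gdvd_def by auto
lemma gdvd_mult_self2[intro]: "x \<in> ZI \<Longrightarrow> gdvd a (x * a)"
  unfolding gdvd_def by (auto simp: mult.commute)
lemma gdvd_mult_mono: "gdvd a b \<Longrightarrow> gdvd c d \<Longrightarrow> gdvd (a * c) (b * d)"
  unfolding gdvd_def by (metis ZI_mult mult.assoc mult.left_commute)
lemma gdvd_power_mono: "gdvd a b \<Longrightarrow> gdvd (a ^ n) (b ^ n)"
  by (induction n) (auto intro: gdvd_mult_mono)
lemma gdvd_pow_le: "a \<in> ZI \<Longrightarrow> m \<le> n \<Longrightarrow> gdvd (a ^ m) (a ^ n)"
  unfolding gdvd_def by (rule bexI[of _ "a^(n-m)"]) (auto simp: power_add[symmetric])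
lemma gdvd_sum: "(\<And>x. x \<in> S \<Longrightarrow> gdvd a (f x)) \<Longrightarrow> gdvd a (sum f S)"
  by (induction S rule: infinite_finite_induct) auto
lemma gdvd_uminus[simp]: "gdvd a (- b) \<longleftrightarrow> gdvd a b"
  unfolding gdvd_def by (metis ZI_uminus minus_minus mult_minus_right)
lemma gdvd_0_iff[simp]: "gdvd 0 b \<longleftrightarrow> b = 0" unfolding gdvd_def by (metis ZI_0 mult_zero_left)

lemma gdvd_cmod: "b \<noteq> 0 \<Longrightarrow> gdvd a b \<Longrightarrow> cmod a \<le> cmod b"
proof -
  assume "b \<noteq> 0" "gdvd a b"
  then obtain c where c: "c \<in> ZI" "b = a * c" unfolding gdvd_def by auto
  with \<open>b \<noteq> 0\<close> have "cmod c \<ge> 1" using ZI_norm_ge1 by auto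
  thus ?thesis using c by (simp add: norm_mult mult_le_cancel_left1)
qed

definition gunit :: "complex \<Rightarrow> bool" where "gunit u \<longleftrightarrow> gdvd u 1"

lemma gunit_cmod: "u \<in> ZI \<Longrightarrow> gunit u \<longleftrightarrow> cmod u = 1"
proof
  assume u: "u \<in> ZI" "gunit u"
  then obtain c where c: "c \<in> ZI" "1 = u * c" unfolding gunit_def gdvd_def by auto
  hence "u \<noteq> 0" "c \<noteq> 0" by auto
  hence "cmod u \<ge> 1" "cmod c \<ge> 1" using u c ZI_norm_ge1 by auto
  moreover have "cmod u * cmod c = 1" using c by (metis norm_mult norm_one)
  moreover have "cmod u \<le> cmod u * cmod c" using \<open>cmod c \<ge> 1\<close> \<open>cmod u \<ge> 1\<close> by (simp add: mult_le_cancel_left1)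
  ultimately show "cmod u = 1" by linarith
next
  assume u: "u \<in> ZI" "cmod u = 1"
  hence "u * cnj u = 1" by (simp add: complex_norm_square[symmetric] power2_eq_square complex_mult_cnj)
  thus "gunit u" unfolding gunit_def gdvd_def using u by (auto intro!: bexI[of _ "cnj u"])
qed

lemma nonunit_cmod: "u \<in> ZI \<Longrightarrow> u \<noteq> 0 \<Longrightarrow> \<not> gunit u \<Longrightarrow> cmod u > 1"
  using ZI_norm_ge1 gunit_cmod by force

lemma gdvd_unit: "gunit u \<Longrightarrow> b \<in> ZI \<Longrightarrow> gdvd u b"
  unfolding gunit_def by (metis gdvd_multR mult_1)



lemma sq_le: "\<bar>t::real\<bar> \<le> 1/2 \<Longrightarrow> t^2 \<le> 1/4"
proof -
  assume "\<bar>t\<bar> \<le> 1/2"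
  hence "t^2 \<le> (1/2)^2" using abs_le_square_iff[of t "1/2"] by simp
  thus ?thesis by (simp add: power2_eq_square)
qed

lemma gdiv: assumes "a \<in> ZI" "b \<in> ZI" "b \<noteq> 0" shows "\<exists>q\<in>ZI. cmod (a - b * q) < cmod b"
proof -
  define w where "w = a / b"
  define q where "q = Complex (of_int (round (Re w))) (of_int (round (Im w)))"
  have q: "q \<in> ZI" by (simp add: q_def ZI_def)
  have "\<bar>of_int (round (Re w)) - Re w\<bar> \<le> 1/2" by (rule of_int_round_abs_le)
  hence h1: "\<bar>Re w - Re q\<bar> \<le> 1/2" unfolding q_def complex.sel by (simp add: abs_minus_commute)
  have "\<bar>of_int (round (Im w)) - Im w\<bar> \<le> 1/2" by (rule of_int_round_abs_le)
  hence h2: "\<bar>Im w - Im q\<bar> \<le> 1/2" unfolding q_def complex.sel by (simp add: abs_minus_commute)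
  have "(cmod (w - q))^2 = (Re w - Re q)^2 + (Im w - Im q)^2" by (simp add: cmod_power2)
  also have "\<dots> \<le> 1/4 + 1/4"
    using sq_le[OF h1] sq_le[OF h2] by (rule add_mono)
  finally have "(cmod (w - q))^2 < 1^2" by simp
  hence lt: "cmod (w - q) < 1" by (rule power_less_imp_less_base) simp
  have "b * (w - q) = b * (a / b) - b * q" by (simp add: w_def right_diff_distrib)
  also have "\<dots> = a - b * q" using assms(3) by simp
  finally have "cmod (a - b * q) = cmod b * cmod (w - q)" by (metis norm_mult)
  also have "\<dots> < cmod b" using lt assms by simp
  finally show ?thesis using q by blast
qed

lemma mem_principal: "y \<in> principal g \<longleftrightarrow> gdvd g y"
  by (auto simp: principal_def gdvd_def)

lemma principal_gideal: "g \<in> ZI \<Longrightarrow> gideal (principal g)"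
  unfolding gideal_def by (auto simp: mem_principal intro: gdvd_ZI)

lemma pid: assumes I: "gideal I" shows "\<exists>g\<in>ZI. I = principal g"
proof (cases "I = {0}")
  case True
  then show ?thesis by (intro bexI[of _ 0]) (auto simp: mem_principal)
next
  case False
  have I0: "0 \<in> I" and IZ: "I \<subseteq> ZI" using I by (auto simp: gideal_def)
  have Iadd: "\<And>x y. x \<in> I \<Longrightarrow> y \<in> I \<Longrightarrow> x + y \<in> I" and Imul: "\<And>x r. x \<in> I \<Longrightarrow> r \<in> ZI \<Longrightarrow> r * x \<in> I"
    using I unfolding gideal_def by auto
  with False I0 obtain x where "x \<in> I" "x \<noteq> 0" by auto
  define n where "n = (LEAST n. \<exists>g\<in>I. g \<noteq> 0 \<and> gn g = n)"
  have "\<exists>g\<in>I. g \<noteq> 0 \<and> gn g = n" unfolding n_def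
    by (rule LeastI[of _ "gn x"]) (use \<open>x \<in> I\<close> \<open>x \<noteq> 0\<close> in auto)
  then obtain g where g: "g \<in> I" "g \<noteq> 0" "gn g = n" by auto
  have minimal: "gn h \<ge> n" if "h \<in> I" "h \<noteq> 0" for h
    unfolding n_def by (rule Least_le) (use that in auto)
  have gZ: "g \<in> ZI" using g IZ by auto
  have "I = principal g"
  proof
    show "I \<subseteq> principal g"
    proof
      fix y assume y: "y \<in> I"
      hence yZ: "y \<in> ZI" using IZ by auto
      obtain q where q: "q \<in> ZI" "cmod (y - g * q) < cmod g" using gdiv[OF yZ gZ g(2)] by auto
      have "q * g \<in> I" using Imul g q by blast
      hence "-1 * (q * g) \<in> I" using Imul[of "q*g" "-1"] by simp
      hence "y + -1 * (q * g) \<in> I" using Iadd y by blast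
      hence r: "y - g * q \<in> I" by (simp add: algebra_simps)
      have "y - g * q = 0"
      proof (rule ccontr)
        assume "y - g * q \<noteq> 0"
        hence "gn (y - g*q) \<ge> n" using minimal r by auto
        moreover have "gn (y - g*q) < gn g" using gn_less q gZ yZ by auto
        ultimately show False using g by auto
      qed
      thus "y \<in> principal g" using q by (auto simp: mem_principal gdvd_def)
    qed
  next
    show "principal g \<subseteq> I"
    proof
      fix y assume "y \<in> principal g"
      then obtain c where "c \<in> ZI" "y = c * g" by (auto simp: principal_def mult.commute)
      thus "y \<in> I" using Imul g by blast
    qed
  qed
  thus ?thesis using gZ by auto
qed

lemma principal_1: "principal 1 = ZI" by (auto simp: principal_def)

lemma principal_subset_iff: "a \<in> ZI \<Longrightarrow> principal a \<subseteq> principal b \<longleftrightarrow> gdvd b a"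
proof
  assume "principal a \<subseteq> principal b"
  moreover have "a \<in> principal a" by (simp add: mem_principal)
  ultimately have "a \<in> principal b" by blast
  thus "gdvd b a" by (simp add: mem_principal)
next
  assume "gdvd b a" thus "principal a \<subseteq> principal b" using gdvd_trans[of b a] by (auto simp: mem_principal)
qed

lemma principal_eqD: "a \<in> ZI \<Longrightarrow> b \<in> ZI \<Longrightarrow> principal a = principal b \<Longrightarrow> gdvd a b \<and> gdvd b a"
  using principal_subset_iff by (metis order_refl)

lemma ideal_gen_eq: "gideal J \<Longrightarrow> S \<subseteq> J \<Longrightarrow> (\<And>I. gideal I \<Longrightarrow> S \<subseteq> I \<Longrightarrow> J \<subseteq> I) \<Longrightarrow> ideal_gen S = J"
  unfolding ideal_gen_def by blast

lemma ideal_mult_principal: assumes "a \<in> ZI" "b \<in> ZI"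
  shows "ideal_mult (principal a) (principal b) = principal (a * b)"
  unfolding ideal_mult_def
proof (rule ideal_gen_eq)
  show "gideal (principal (a * b))" using assms by (simp add: principal_gideal)
  show "{x * y |x y. x \<in> principal a \<and> y \<in> principal b} \<subseteq> principal (a * b)"
    by (auto simp: mem_principal intro: gdvd_mult_mono)
  fix I assume I: "gideal I" "{x * y |x y. x \<in> principal a \<and> y \<in> principal b} \<subseteq> I"
  have "a \<in> principal a" "b \<in> principal b" by (auto simp: mem_principal)
  hence ab: "a * b \<in> I" using I(2) by blast
  show "principal (a * b) \<subseteq> I"
  proof
    fix y assume "y \<in> principal (a*b)"
    then obtain c where "c \<in> ZI" "y = c * (a * b)" by (auto simp: principal_def mult.commute)
    thus "y \<in> I" using I(1) ab unfolding gideal_def by blast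
  qed
qed

lemma ideal_pow_principal: "a \<in> ZI \<Longrightarrow> ideal_pow (principal a) n = principal (a ^ n)"
  by (induction n) (auto simp: principal_1 ideal_mult_principal)

lemma principal_0: "principal 0 = {0}"
proof
  show "principal 0 \<subseteq> {0}" by (auto simp: principal_def)
  show "{0} \<subseteq> principal 0" by (simp add: mem_principal)
qed

lemma nzp_principal: assumes "g \<in> ZI" shows "nzp_ideal (principal g) \<longleftrightarrow> g \<noteq> 0 \<and> \<not> gunit g"
proof -
  have gg: "g \<in> principal g" by (simp add: mem_principal)
  have "principal g = {0} \<longleftrightarrow> g = 0"
    using gg principal_0 by auto
  moreover have "principal g = ZI \<longleftrightarrow> gunit g"
  proof
    assume "principal g = ZI"
    hence "1 \<in> principal g" by simp
    thus "gunit g" unfolding gunit_def by (simp add: mem_principal)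
  next
    assume u: "gunit g"
    show "principal g = ZI"
      by (rule set_eqI) (auto simp: mem_principal intro: gdvd_ZI[OF assms] gdvd_unit[OF u])
  qed
  ultimately show ?thesis using principal_gideal[OF assms] by (auto simp: nzp_ideal_def)
qed



definition gprime :: "complex \<Rightarrow> bool" where
  "gprime p \<longleftrightarrow> p \<in> ZI \<and> p \<noteq> 0 \<and> \<not> gunit p \<and> (\<forall>a\<in>ZI. \<forall>b\<in>ZI. gdvd p (a*b) \<longrightarrow> gdvd p a \<or> gdvd p b)"

lemma gprime_ideal: "gprime p \<Longrightarrow> nz_prime_ideal (principal p)"
  unfolding nz_prime_ideal_def gprime_def by (auto simp: nzp_principal mem_principal)

lemma bezout_gen: assumes "a \<in> ZI" "b \<in> ZI"
  shows "\<exists>d\<in>ZI. gdvd d a \<and> gdvd d b \<and> (\<exists>u\<in>ZI. \<exists>v\<in>ZI. u * a + v * b = d)"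
proof -
  define I where "I = {u * a + v * b | u v. u \<in> ZI \<and> v \<in> ZI}"
  have "gideal I" unfolding gideal_def I_def
  proof (intro conjI ballI)
    show "{u * a + v * b |u v. u \<in> ZI \<and> v \<in> ZI} \<subseteq> ZI" using assms by auto
    show "0 \<in> {u * a + v * b |u v. u \<in> ZI \<and> v \<in> ZI}" by (auto intro!: exI[of _ 0])
    fix x y assume "x \<in> {u * a + v * b |u v. u \<in> ZI \<and> v \<in> ZI}" "y \<in> {u * a + v * b |u v. u \<in> ZI \<and> v \<in> ZI}"
    then obtain u v u' v' where "u \<in> ZI" "v \<in> ZI" "u' \<in> ZI" "v' \<in> ZI" "x = u*a + v*b" "y = u'*a+v'*b" by auto
    hence "x + y = (u+u') * a + (v+v') * b" "u + u' \<in> ZI" "v + v' \<in> ZI" by (simp_all add: algebra_simps)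
    thus "x + y \<in> {u * a + v * b |u v. u \<in> ZI \<and> v \<in> ZI}" by blast
  next
    fix x r assume "x \<in> {u * a + v * b |u v. u \<in> ZI \<and> v \<in> ZI}" "r \<in> ZI"
    then obtain u v where "u \<in> ZI" "v \<in> ZI" "x = u*a + v*b" by auto
    hence "r * x = (r*u) * a + (r*v) * b" "r*u \<in> ZI" "r*v \<in> ZI" using \<open>r \<in> ZI\<close> by (simp_all add: algebra_simps)
    thus "r * x \<in> {u * a + v * b |u v. u \<in> ZI \<and> v \<in> ZI}" by blast
  qed
  then obtain d where d: "d \<in> ZI" "I = principal d" using pid by blast
  have "a = 1 * a + 0 * b" "b = 0 * a + 1 * b" by simp_all
  hence "a \<in> I" "b \<in> I" unfolding I_def by (metis (mono_tags, lifting) ZI_0 ZI_1 mem_Collect_eq)+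
  hence "gdvd d a" "gdvd d b" using d by (auto simp: mem_principal)
  moreover have "d \<in> I" using d by (simp add: mem_principal)
  ultimately show ?thesis using d unfolding I_def by blast
qed

lemma bezout_prime: assumes p: "gprime p" and x: "x \<in> ZI" "\<not> gdvd p x"
  shows "\<exists>u\<in>ZI. \<exists>v\<in>ZI. u * p + v * x = 1"
proof -
  have pZ: "p \<in> ZI" using p by (auto simp: gprime_def)
  obtain d u v where d: "d \<in> ZI" "gdvd d p" "gdvd d x" "u \<in> ZI" "v \<in> ZI" "u * p + v * x = d"
    using bezout_gen[OF pZ x(1)] by blast
  obtain t where t: "t \<in> ZI" "p = d * t" using d by (auto simp: gdvd_def)
  have pr: "\<forall>a\<in>ZI. \<forall>b\<in>ZI. gdvd p (a*b) \<longrightarrow> gdvd p a \<or> gdvd p b" using p by (simp add: gprime_def)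
  have "gdvd p (d * t)" using t(2) by simp
  hence "gdvd p d \<or> gdvd p t" using pr d(1) t(1) by blast
  moreover have "\<not> gdvd p d" using gdvd_trans[OF _ d(3)] x(2) by blast
  ultimately obtain t' where t': "t' \<in> ZI" "t = p * t'" by (auto simp: gdvd_def)
  have "p = d * t" by (rule t(2))
  also have "\<dots> = d * (p * t')" by (simp only: t'(2))
  finally have "p * 1 = p * (d * t')" by (simp add: algebra_simps)
  hence "d * t' = 1" using p by (auto simp: gprime_def)
  hence "t' * (u * p + v * x) = 1" using d by (simp add: mult.commute)
  hence "(t' * u) * p + (t' * v) * x = 1" by (simp add: algebra_simps)
  moreover have "t' * u \<in> ZI" "t' * v \<in> ZI" using t' d by simp_all
  ultimately show ?thesis by blast
qed

lemma bezout_pow: assumes p: "gprime p" and x: "x \<in> ZI" "\<not> gdvd p x"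
  shows "\<exists>u\<in>ZI. \<exists>v\<in>ZI. u * p ^ n + v * x = 1"
proof (induction n)
  case 0
  have "1 * p ^ 0 + 0 * x = 1" by simp
  thus ?case using ZI_0 ZI_1 by blast
next
  case (Suc n)
  then obtain a b where ab: "a \<in> ZI" "b \<in> ZI" "a * p^n + b * x = 1" by auto
  obtain u v where uv: "u \<in> ZI" "v \<in> ZI" "u * p + v * x = 1" using bezout_prime[OF assms] by auto
  have "(a * p^n + b * x) * (u * p + v * x) = 1" using ab uv by simp
  hence "(a*u) * p ^ Suc n + (a * p^n * v + b * u * p + b * v * x) * x = 1"
    by (simp add: algebra_simps)
  moreover have "p \<in> ZI" using p by (simp add: gprime_def)
  hence "a*u \<in> ZI" "a * p^n * v + b * u * p + b * v * x \<in> ZI" using ab uv x by simp_all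
  ultimately show ?case by blast
qed

lemma coprime_mult_dvd: assumes p: "gprime p" and g: "g \<in> ZI" "\<not> gdvd p g"
  and h: "gdvd (p ^ n) c" "gdvd g c"
  shows "gdvd (p ^ n * g) c"
proof -
  obtain u v where uv: "u \<in> ZI" "v \<in> ZI" "u * p ^ n + v * g = 1" using bezout_pow[OF p g] by blast
  have "c * (u * p ^ n + v * g) = c" using uv by simp
  hence c: "u * (p^n * c) + v * (c * g) = c" by (simp add: algebra_simps)
  have "gdvd (p^n * g) (p^n * c)" by (rule gdvd_mult_mono[OF gdvd_refl h(2)])
  hence 1: "gdvd (p^n * g) (u * (p^n * c))" using uv(1) by (rule gdvd_multL)
  have "gdvd (p^n * g) (c * g)" by (rule gdvd_mult_mono[OF h(1) gdvd_refl[of g]])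
  hence 2: "gdvd (p^n * g) (v * (c * g))" using uv(2) by (rule gdvd_multL)
  have "gdvd (p^n * g) (u * (p^n * c) + v * (c * g))" using 1 2 by (rule gdvd_add)
  thus ?thesis unfolding c .
qed



lemma prime_not_dvd_pow: assumes p: "gprime p" and x: "x \<in> ZI" "\<not> gdvd p x"
  shows "\<not> gdvd p (x ^ n)"
proof (induction n)
  case 0 thus ?case using p by (simp add: gprime_def gunit_def)
next
  case (Suc n)
  have "x ^ n \<in> ZI" using x by simp
  thus ?case using Suc p x unfolding gprime_def by (auto simp del: power_Suc simp: power_Suc2)
qed

lemma unit_mult_cmod: "a \<in> ZI \<Longrightarrow> a \<noteq> 0 \<Longrightarrow> \<not> gunit a \<Longrightarrow> b \<noteq> 0 \<Longrightarrow> cmod b < cmod (a * b)"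
  using nonunit_cmod[of a] by (simp add: norm_mult)

lemma exists_prime_divisor: assumes b: "b \<in> ZI" "b \<noteq> 0" "\<not> gunit b"
  shows "\<exists>p. gprime p \<and> gdvd p b"
proof -
  define S where "S = {p. p \<in> ZI \<and> \<not> gunit p \<and> gdvd p b}"
  have "b \<in> S" using b by (auto simp: S_def)
  define n where "n = (LEAST n. \<exists>p\<in>S. gn p = n)"
  have "\<exists>p\<in>S. gn p = n" unfolding n_def by (rule LeastI[of _ "gn b"]) (use \<open>b \<in> S\<close> in auto)
  then obtain p where pS: "p \<in> S" "gn p = n" by auto
  have minimal: "gn h \<ge> n" if "h \<in> S" for h unfolding n_def by (rule Least_le) (use that in auto)
  have pZ: "p \<in> ZI" "\<not> gunit p" "gdvd p b" using pS by (auto simp: S_def)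
  have p0: "p \<noteq> 0" using pZ b by auto
  have pr: "gdvd p x \<or> gdvd p y" if xy: "x \<in> ZI" "y \<in> ZI" "gdvd p (x * y)" for x y
    proof (cases "gdvd p x")
      case True thus ?thesis by blast
    next
      case False
      hence npx: "\<not> gdvd p x" .
      obtain d u v where d: "d \<in> ZI" "gdvd d p" "gdvd d x" "u \<in> ZI" "v \<in> ZI" "u * p + v * x = d"
        using bezout_gen[OF pZ(1) xy(1)] by blast
      have "gunit d"
      proof (rule ccontr)
        assume nu: "\<not> gunit d"
        have "gdvd d b" using gdvd_trans[OF d(2) pZ(3)] .
        hence "d \<in> S" using d nu by (simp add: S_def)
        hence "gn d \<ge> gn p" using minimal pS by auto
        obtain t where t: "t \<in> ZI" "p = d * t" using d by (auto simp: gdvd_def)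
        have "d \<noteq> 0" "t \<noteq> 0" using t p0 by auto
        have "gunit t"
        proof (rule ccontr)
          assume "\<not> gunit t"
          hence "cmod d < cmod p" using unit_mult_cmod[of t d] t \<open>d \<noteq> 0\<close> \<open>t \<noteq> 0\<close> by (simp add: mult.commute)
          hence "gn d < gn p" using gn_less d pZ by auto
          thus False using \<open>gn d \<ge> gn p\<close> by simp
        qed
        then obtain t' where "t' \<in> ZI" "1 = t * t'" by (auto simp: gunit_def gdvd_def)
        hence "d = d * (t * t')" by simp
        also have "\<dots> = p * t'" using t by (simp add: mult.assoc)
        finally have "d = p * t'" .
        hence "gdvd p d" using \<open>t' \<in> ZI\<close> by auto
        thus False using d(3) npx gdvd_trans by blast
      qed
      then obtain w where w: "w \<in> ZI" "1 = d * w" by (auto simp: gunit_def gdvd_def)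
      have "(u * p + v * x) * w = 1" using d w by (simp add: mult.commute)
      hence "y = (u * p + v * x) * w * y" by simp
      also have "\<dots> = p * (u * w * y) + (x * y) * (v * w)" by (simp add: algebra_simps)
      finally have yy: "y = p * (u * w * y) + (x * y) * (v * w)" .
      have "gdvd p (p * (u * w * y))" using xy d w by (intro gdvd_mult_self) simp
      moreover have "gdvd p ((x * y) * (v * w))" by (rule gdvd_multR) (use xy d w in simp_all)
      ultimately have "gdvd p y" by (subst yy) (rule gdvd_add)
      thus ?thesis by blast
    qed
  have "gprime p" unfolding gprime_def using pZ p0 pr by blast
  thus ?thesis using pZ by auto
qed

lemma decompose: assumes p: "gprime p" shows "b \<in> ZI \<Longrightarrow> b \<noteq> 0 \<Longrightarrow> \<exists>e b'. b' \<in> ZI \<and> b = p ^ e * b' \<and> \<not> gdvd p b'"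
proof (induction "gn b" arbitrary: b rule: less_induct)
  case less
  show ?case
  proof (cases "gdvd p b")
    case False
    have "b = p ^ 0 * b" by simp
    thus ?thesis using less False by blast
  next
    case True
    then obtain b1 where b1: "b1 \<in> ZI" "b = p * b1" by (auto simp: gdvd_def)
    have "b1 \<noteq> 0" using less b1 by auto
    have pp: "p \<in> ZI" "p \<noteq> 0" "\<not> gunit p" using p by (simp_all add: gprime_def)
    have "cmod b1 < cmod b" using unit_mult_cmod[OF pp \<open>b1 \<noteq> 0\<close>] b1(2) by simp
    hence "gn b1 < gn b" using gn_less b1(1) less.prems(1) by blast
    from less.hyps[OF this b1(1) \<open>b1 \<noteq> 0\<close>]
    obtain e b' where "b' \<in> ZI" "b1 = p ^ e * b'" "\<not> gdvd p b'" by blast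
    hence "b = p ^ Suc e * b'" "b' \<in> ZI" "\<not> gdvd p b'" using b1 by (simp_all add: mult.assoc)
    thus ?thesis by blast
  qed
qed



lemma pcompose_as_sum: "pcompose p q = (\<Sum>i\<le>degree p. smult (coeff p i) (q ^ i))"
proof -
  have "pcompose p q = poly (map_poly (\<lambda>x. [:x:]) p) q" by (rule pcompose_altdef)
  also have "\<dots> = (\<Sum>i\<le>degree (map_poly (\<lambda>x. [:x:]) p). coeff (map_poly (\<lambda>x. [:x:]) p) i * q ^ i)"
    by (rule poly_altdef)
  also have "degree (map_poly (\<lambda>x. [:x:]) p) = degree p" by (rule degree_map_poly) simp
  also have "(\<lambda>i. coeff (map_poly (\<lambda>x. [:x:]) p) i) = (\<lambda>i. [:coeff p i:])"
    by (rule ext) (rule coeff_map_poly, simp)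
  finally show ?thesis by simp
qed

lemma coeff_linear_power_all: "coeff ([:c, a:] ^ i) k = of_nat (i choose k) * a ^ k * (c::complex) ^ (i - k)"
proof (cases "k \<le> i")
  case True thus ?thesis by (simp add: coeff_linear_poly_power)
next
  case False
  have "degree ([:c, a:] ^ i) \<le> degree [:c, a:] * i" by (rule degree_power_le)
  also have "\<dots> \<le> i" by simp
  finally have "coeff ([:c, a:] ^ i) k = 0" using False by (intro coeff_eq_0) simp
  thus ?thesis using False by simp
qed

lemma coeff_pcomp_lin: "coeff (pcompose p [:c, a:]) k =
    (\<Sum>i\<le>degree p. coeff p i * (of_nat (i choose k) * a ^ k * (c::complex) ^ (i - k)))"
  by (simp add: pcompose_as_sum coeff_sum coeff_linear_power_all)

lemma ZI_poly_pcomp: "ZI_poly p \<Longrightarrow> c \<in> ZI \<Longrightarrow> a \<in> ZI \<Longrightarrow> ZI_poly (pcompose p [:c, a:])"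
  unfolding ZI_poly_def by (simp add: coeff_pcomp_lin)

lemma ZI_poly_poly: "ZI_poly p \<Longrightarrow> x \<in> ZI \<Longrightarrow> poly p x \<in> ZI"
  unfolding ZI_poly_def by (simp add: poly_altdef)

lemma pcomp_shift: "pcompose q [:r, a:] = pcompose (pcompose q [:s, 1:]) [:r - s, (a::complex):]"
proof -
  have "pcompose [:s, 1:] [:r - s, a:] = [:r, a:]" by (simp add: pcompose_pCons)
  thus ?thesis by (simp add: pcompose_assoc[symmetric])
qed

lemma degree_shift: "degree (pcompose q [:s, 1::complex:]) = degree q"
  by (simp add: degree_pcompose)

lemma poly_cong: assumes "ZI_poly p" "x \<in> ZI" "y \<in> ZI" "gdvd d (x - y)"
  shows "gdvd d (poly p x - poly p y)"
  using assms(1)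
proof (induction p rule: pCons_induct)
  case 0 thus ?case by simp
next
  case (pCons a p)
  have "ZI_poly p" using pCons.prems unfolding ZI_poly_def by (metis coeff_pCons_Suc)
  hence IH: "gdvd d (poly p x - poly p y)" by (rule pCons.IH)
  have py: "poly p y \<in> ZI" by (rule ZI_poly_poly[OF \<open>ZI_poly p\<close> assms(3)])
  have "poly (pCons a p) x - poly (pCons a p) y = x * (poly p x - poly p y) + (x - y) * poly p y"
    by (simp add: algebra_simps)
  moreover have "gdvd d (x * (poly p x - poly p y))" using IH assms(2) by (rule gdvd_multL)
  moreover have "gdvd d ((x - y) * poly p y)" using assms(4) py by (rule gdvd_multR)
  ultimately show ?case by (simp add: gdvd_add)
qed



lemma gunit_powD: "p \<in> ZI \<Longrightarrow> 1 \<le> e \<Longrightarrow> gunit (p ^ e) \<Longrightarrow> gunit p"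
  unfolding gunit_def using gdvd_trans[OF gdvd_pow_le[of p 1 e]] by simp

lemma gprime_pow: assumes "gprime p" "1 \<le> e"
  shows "p ^ e \<in> ZI" "p ^ e \<noteq> 0" "\<not> gunit (p ^ e)"
  using assms gunit_powD[of p e] by (auto simp: gprime_def)

lemma principal_assoc: "a \<in> ZI \<Longrightarrow> b \<in> ZI \<Longrightarrow> gdvd a b \<Longrightarrow> gdvd b a \<Longrightarrow> principal a = principal b"
proof -
  assume "a \<in> ZI" "b \<in> ZI" "gdvd a b" "gdvd b a"
  hence "principal a \<subseteq> principal b" "principal b \<subseteq> principal a" using principal_subset_iff by simp_all
  thus ?thesis by (rule subset_antisym)
qed

lemma exists_not_dvd_pow: assumes p: "gprime p" and x: "x \<in> ZI" "x \<noteq> 0"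
  shows "\<exists>n\<ge>1. \<not> gdvd (p ^ n) x"
proof -
  have "cmod p > 1" using p nonunit_cmod by (auto simp: gprime_def)
  then obtain n where n: "cmod x < cmod p ^ n" using real_arch_pow by blast
  have "cmod p ^ n \<le> cmod p ^ Suc n" using \<open>cmod p > 1\<close> by (intro power_increasing) auto
  hence "cmod x < cmod (p ^ Suc n)" using n by (simp add: norm_power del: power_Suc)
  hence "\<not> gdvd (p ^ Suc n) x" using gdvd_cmod[OF x(2)] by force
  thus ?thesis by (intro exI[of _ "Suc n"]) simp
qed

lemma gdvd_1_iff: "gdvd (p ^ 0) x \<longleftrightarrow> x \<in> ZI" by simp

locale setting =
  fixes q :: "complex poly" and d :: nat
    and s :: "complex set \<Rightarrow> nat \<Rightarrow> complex"
    and lam :: "complex set \<Rightarrow> complex set"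
    and A :: "complex set" and \<alpha> \<gamma> r :: complex
  assumes q_int: "intersective q" and q_nz: "q \<noteq> 0" and q_deg: "degree q = d"
    and roots: "\<And>P. nz_prime_ideal P \<Longrightarrow> padic_root q P (s P)"
    and lam_maps: "\<And>I. nzp_ideal I \<Longrightarrow> nzp_ideal (lam I)"
    and lam_mult: "\<And>I J. nzp_ideal I \<Longrightarrow> nzp_ideal J \<Longrightarrow>
                      lam (ideal_mult I J) = ideal_mult (lam I) (lam J)"
    and lam_prime: "\<And>P. nz_prime_ideal P \<Longrightarrow> lam P = ideal_pow P (root_mult q P (s P))"
    and A_ideal: "nzp_ideal A" and \<alpha>: "\<alpha> \<in> ZI" "A = principal \<alpha>"
    and \<gamma>: "\<gamma> \<in> ZI" "lam A = principal \<gamma>"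
    and r: "r \<in> ZI" "cmod r \<le> 2 * cmod \<alpha>" "poly q r \<in> A"
    and r_cong: "\<And>P n. nz_prime_ideal P \<Longrightarrow> n \<ge> 1 \<Longrightarrow> A \<subseteq> ideal_pow P n \<Longrightarrow>
                    r - s P n \<in> ideal_pow P n"
begin

lemma ZIq: "ZI_poly q" using q_int by (simp add: intersective_def)

lemma \<alpha>_nz: "\<alpha> \<noteq> 0" and \<alpha>_nu: "\<not> gunit \<alpha>"
  using A_ideal \<alpha> nzp_principal by auto

lemma \<gamma>_nz: "\<gamma> \<noteq> 0"
  using lam_maps[OF A_ideal] \<gamma> nzp_principal by auto

definition c :: "nat \<Rightarrow> complex" where "c k = coeff (pcompose q [:r, \<alpha>:]) k"

lemma c_ZI: "c k \<in> ZI"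
  using ZI_poly_pcomp[OF ZIq r(1) \<alpha>(1)] by (simp add: c_def ZI_poly_def)

definition mm :: "complex \<Rightarrow> nat" where "mm p = root_mult q (principal p) (s (principal p))"

context
  fixes p :: complex
  assumes p: "gprime p"
begin

lemma pZ: "p \<in> ZI" using p by (simp add: gprime_def)

lemma proot: "padic_root q (principal p) (s (principal p))"
  using roots[OF gprime_ideal[OF p]] .

lemma s_ZI: "n \<ge> 1 \<Longrightarrow> s (principal p) n \<in> ZI"
  using proot by (simp add: padic_root_def padic_elem_def)

lemma s_step: "n \<ge> 1 \<Longrightarrow> gdvd (p ^ n) (s (principal p) (Suc n) - s (principal p) n)"
  using proot pZ by (simp add: padic_root_def padic_elem_def ideal_pow_principal mem_principal)

lemma s_root: "n \<ge> 1 \<Longrightarrow> gdvd (p ^ n) (poly q (s (principal p) n))"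
  using proot pZ by (simp add: padic_root_def ideal_pow_principal mem_principal)

lemma s_tele: assumes "1 \<le> e" shows "e \<le> N \<Longrightarrow> gdvd (p ^ e) (s (principal p) N - s (principal p) e)"
proof (induction N rule: dec_induct)
  case base thus ?case by simp
next
  case (step n)
  have "gdvd (p ^ e) (p ^ n)" using step pZ by (intro gdvd_pow_le) auto
  moreover have "n \<ge> 1" using step assms by simp
  ultimately have "gdvd (p ^ e) (s (principal p) (Suc n) - s (principal p) n)"
    using s_step[of n] gdvd_trans by blast
  hence "gdvd (p ^ e) ((s (principal p) (Suc n) - s (principal p) n) + (s (principal p) n - s (principal p) e))"
    using step.IH by (rule gdvd_add)
  thus ?case by simp
qed

lemma r_close: assumes "gdvd (p ^ e) \<alpha>" "e \<le> N" "1 \<le> N"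
  shows "gdvd (p ^ e) (r - s (principal p) N)"
proof (cases "e = 0")
  case True thus ?thesis using r(1) s_ZI[OF assms(3)] by simp
next
  case False
  hence e1: "1 \<le> e" by simp
  have "A \<subseteq> ideal_pow (principal p) e"
    using assms(1) \<alpha> pZ by (simp add: ideal_pow_principal principal_subset_iff)
  hence "r - s (principal p) e \<in> ideal_pow (principal p) e"
    using r_cong[OF gprime_ideal[OF p] e1] by blast
  hence 1: "gdvd (p ^ e) (r - s (principal p) e)" using pZ by (simp add: ideal_pow_principal mem_principal)
  have 2: "gdvd (p ^ e) (s (principal p) N - s (principal p) e)" using s_tele[OF e1 assms(2)] .
  have "gdvd (p ^ e) ((r - s (principal p) e) - (s (principal p) N - s (principal p) e))"
    using 1 2 by (rule gdvd_diff)
  thus ?thesis by simp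
qed

definition Qs :: "nat \<Rightarrow> complex poly" where "Qs n = pcompose q [:s (principal p) n, 1:]"

lemma Qs_ZI: "n \<ge> 1 \<Longrightarrow> coeff (Qs n) j \<in> ZI"
  using ZI_poly_pcomp[OF ZIq s_ZI] by (simp add: Qs_def ZI_poly_def)

lemma mm_props: "1 \<le> mm p" "\<And>j n. j < mm p \<Longrightarrow> 1 \<le> n \<Longrightarrow> gdvd (p ^ n) (coeff (Qs n) j)"
proof -
  let ?R = "\<lambda>k. \<not> (\<forall>n\<ge>1. coeff (pcompose q [:s (principal p) n, 1:]) k \<in> ideal_pow (principal p) n)"
  have lc: "lead_coeff q \<in> ZI" "lead_coeff q \<noteq> 0" using ZIq q_nz by (auto simp: ZI_poly_def)
  obtain n where n: "n \<ge> 1" "\<not> gdvd (p ^ n) (lead_coeff q)" using exists_not_dvd_pow[OF p lc] by blast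
  have "coeff (pcompose q [:s (principal p) n, 1:]) d = lead_coeff q"
    using lead_coeff_comp[of "[:s (principal p) n, 1:]" q] by (simp add: degree_shift q_deg)
  hence "?R d" using n pZ by (auto simp: ideal_pow_principal mem_principal)
  hence R: "?R (mm p)" unfolding mm_def root_mult_def by (rule LeastI)
  have below: "\<not> ?R j" if "j < mm p" for j
    using not_less_Least[of j ?R] that unfolding mm_def root_mult_def by blast
  thus "\<And>j n. j < mm p \<Longrightarrow> 1 \<le> n \<Longrightarrow> gdvd (p ^ n) (coeff (Qs n) j)"
    using pZ by (auto simp: Qs_def ideal_pow_principal mem_principal)
  show "1 \<le> mm p"
  proof (rule ccontr)
    assume "\<not> 1 \<le> mm p"
    hence "mm p = 0" by simp
    with R obtain n where "n \<ge> 1" "coeff (pcompose q [:s (principal p) n, 1:]) 0 \<notin> ideal_pow (principal p) n" by auto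
    moreover have "coeff (pcompose q [:s (principal p) n, 1:]) 0 = poly q (s (principal p) n)"
      by (simp add: poly_0_coeff_0[symmetric] poly_pcompose)
    ultimately show False using s_root[of n] pZ by (simp add: ideal_pow_principal mem_principal)
  qed
qed

end

end



context setting begin

lemma local_claim: assumes p: "gprime p" and e: "gdvd (p ^ e) \<alpha>"
  shows "gdvd (p ^ (mm p * e)) (c k)"
proof (cases "e = 0")
  case True thus ?thesis using c_ZI by simp
next
  case False
  hence e1: "1 \<le> e" by simp
  define m where "m = mm p"
  define N where "N = m * e + e"
  have N1: "1 \<le> N" "e \<le> N" using e1 by (auto simp: N_def)
  define t where "t = s (principal p) N"
  have pZ: "p \<in> ZI" using p by (simp add: gprime_def)
  have tZ: "t \<in> ZI" using s_ZI[OF p N1(1)] by (simp add: t_def)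
  have rt: "gdvd (p ^ e) (r - t)" using r_close[OF p e N1(2) N1(1)] by (simp add: t_def)
  have "c k = coeff (pcompose (pcompose q [:t, 1:]) [:r - t, \<alpha>:]) k"
    unfolding c_def by (simp add: pcomp_shift[of q r \<alpha> t])
  also have "\<dots> = coeff (pcompose (Qs p N) [:r - t, \<alpha>:]) k" by (simp add: Qs_def[OF p] t_def)
  also have "\<dots> = (\<Sum>j\<le>degree (Qs p N). coeff (Qs p N) j * (of_nat (j choose k) * \<alpha> ^ k * (r - t) ^ (j - k)))"
    by (rule coeff_pcomp_lin)
  also have "degree (Qs p N) = d" by (simp add: Qs_def[OF p] degree_shift q_deg)
  finally have ck: "c k = (\<Sum>j\<le>d. coeff (Qs p N) j * (of_nat (j choose k) * \<alpha> ^ k * (r - t) ^ (j - k)))" .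
  have "gdvd (p ^ (m * e)) (coeff (Qs p N) j * (of_nat (j choose k) * \<alpha> ^ k * (r - t) ^ (j - k)))" for j
  proof (cases "j < m")
    case True
    have "gdvd (p ^ N) (coeff (Qs p N) j)" using mm_props(2)[OF p, of j N] True N1 by (simp add: m_def)
    moreover have "gdvd (p ^ (m * e)) (p ^ N)" using pZ by (intro gdvd_pow_le) (auto simp: N_def)
    ultimately have "gdvd (p ^ (m * e)) (coeff (Qs p N) j)" using gdvd_trans by blast
    thus ?thesis using \<alpha>(1) rt tZ r(1) by (intro gdvd_multR) simp_all
  next
    case False
    show ?thesis
    proof (cases "k \<le> j")
      case False hence "j choose k = 0" by simp
      thus ?thesis by (simp only: of_nat_0 mult_zero_left mult_zero_right gdvd_0)
    next
      case True
      have "gdvd ((p ^ e) ^ k) (\<alpha> ^ k)" using e by (rule gdvd_power_mono)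
      moreover have "gdvd ((p ^ e) ^ (j - k)) ((r - t) ^ (j - k))" using rt by (rule gdvd_power_mono)
      ultimately have "gdvd ((p ^ e) ^ k * (p ^ e) ^ (j - k)) (\<alpha> ^ k * (r - t) ^ (j - k))"
        by (rule gdvd_mult_mono)
      moreover have "(p ^ e) ^ k * (p ^ e) ^ (j - k) = p ^ (e * j)"
        using True by (simp add: power_mult[symmetric] power_add[symmetric] add_mult_distrib2[symmetric])
      ultimately have 1: "gdvd (p ^ (e * j)) (\<alpha> ^ k * (r - t) ^ (j - k))" by simp
      have "gdvd (p ^ (m * e)) (p ^ (e * j))" using pZ False by (intro gdvd_pow_le) auto
      hence "gdvd (p ^ (m * e)) (\<alpha> ^ k * (r - t) ^ (j - k))" using 1 gdvd_trans by blast
      hence "gdvd (p ^ (m * e)) (of_nat (j choose k) * (\<alpha> ^ k * (r - t) ^ (j - k)))"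
        by (rule gdvd_multL) simp
      hence "gdvd (p ^ (m * e)) ((of_nat (j choose k) * (\<alpha> ^ k * (r - t) ^ (j - k))) * coeff (Qs p N) j)"
        using Qs_ZI[OF p N1(1)] by (rule gdvd_multR)
      thus ?thesis by (simp add: mult_ac)
    qed
  qed
  hence "gdvd (p ^ (m * e)) (\<Sum>j\<le>d. coeff (Qs p N) j * (of_nat (j choose k) * \<alpha> ^ k * (r - t) ^ (j - k)))"
    by (intro gdvd_sum)
  thus ?thesis using ck by (simp add: m_def)
qed

lemma lam_pow: assumes p: "gprime p" shows "1 \<le> e \<Longrightarrow> lam (principal (p ^ e)) = principal (p ^ (mm p * e))"
proof (induction e rule: dec_induct)
  case base
  have "lam (principal p) = ideal_pow (principal p) (mm p)"
    using lam_prime[OF gprime_ideal[OF p]] by (simp add: mm_def)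
  thus ?case using p by (simp add: ideal_pow_principal gprime_def)
next
  case (step e)
  have pZ: "p \<in> ZI" using p by (simp add: gprime_def)
  have nz1: "nzp_ideal (principal p)" using p by (simp add: nzp_principal gprime_def)
  have nz2: "nzp_ideal (principal (p ^ e))" using gprime_pow[OF p step.hyps(1)] by (simp add: nzp_principal)
  have "principal (p ^ Suc e) = ideal_mult (principal p) (principal (p ^ e))"
    using pZ by (simp add: ideal_mult_principal)
  hence "lam (principal (p ^ Suc e)) = ideal_mult (lam (principal p)) (lam (principal (p ^ e)))"
    using lam_mult[OF nz1 nz2] by simp
  also have "lam (principal p) = principal (p ^ mm p)"
    using lam_prime[OF gprime_ideal[OF p]] pZ by (simp add: mm_def ideal_pow_principal)
  also have "ideal_mult (principal (p ^ mm p)) (lam (principal (p ^ e))) = principal (p ^ mm p * p ^ (mm p * e))"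
    using step.IH pZ by (simp add: ideal_mult_principal)
  also have "p ^ mm p * p ^ (mm p * e) = p ^ (mm p * Suc e)" by (simp add: power_add[symmetric])
  finally show ?case .
qed

end



declare gdvd_mult_self[simp] gdvd_mult_self2[simp]

context setting begin

lemma claim: "b \<in> ZI \<Longrightarrow> b \<noteq> 0 \<Longrightarrow> \<not> gunit b \<Longrightarrow> gdvd b \<alpha> \<Longrightarrow>
  \<exists>g\<in>ZI. lam (principal b) = principal g \<and> (\<forall>k. gdvd g (c k)) \<and> (\<exists>N. gdvd g (b ^ N)) \<and> gdvd b g"
proof (induction "gn b" arbitrary: b rule: less_induct)
  case less
  obtain p where p: "gprime p" "gdvd p b" using exists_prime_divisor[OF less.prems(1-3)] by blast
  have pZ: "p \<in> ZI" using p by (simp add: gprime_def)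
  obtain e b' where eb: "b' \<in> ZI" "b = p ^ e * b'" "\<not> gdvd p b'"
    using decompose[OF p(1) less.prems(1,2)] by blast
  have e1: "1 \<le> e"
  proof (rule ccontr)
    assume "\<not> 1 \<le> e" hence "e = 0" by simp
    hence "b = b'" using eb(2) by simp
    thus False using eb(3) p(2) by simp
  qed
  define m where "m = mm p"
  have m1: "1 \<le> m" using mm_props(1)[OF p(1)] by (simp add: m_def)
  have peb: "gdvd (p ^ e) b" using eb(1,2) by simp
  have pea: "gdvd (p ^ e) \<alpha>" using gdvd_trans[OF peb less.prems(4)] .
  have LC: "\<And>k. gdvd (p ^ (m * e)) (c k)" using local_claim[OF p(1) pea] by (simp add: m_def)
  have lp: "lam (principal (p ^ e)) = principal (p ^ (m * e))" using lam_pow[OF p(1) e1] by (simp add: m_def)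
  have pmeZ: "p ^ (m * e) \<in> ZI" using pZ by simp
  have bpow: "b ^ m = p ^ (m * e) * b' ^ m" using eb(2) by (simp add: power_mult_distrib power_mult[symmetric] mult.commute)
  have pm_bm: "gdvd (p ^ (m * e)) (b ^ m)" unfolding bpow using eb(1) by (intro gdvd_mult_self) simp
  have pe_pme: "gdvd (p ^ e) (p ^ (m * e))" using pZ m1 by (intro gdvd_pow_le) auto
  have b0': "b' \<noteq> 0" using eb less.prems(2) by auto
  show ?case
  proof (cases "gunit b'")
    case True
    then obtain w where w: "w \<in> ZI" "1 = b' * w" by (auto simp: gunit_def gdvd_def)
    have "p ^ e = p ^ e * (b' * w)" by (simp add: w(2)[symmetric])
    also have "\<dots> = b * w" by (simp add: eb(2) mult.assoc)
    finally have "p ^ e = b * w" .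
    hence "gdvd b (p ^ e)" using w(1) by simp
    hence "principal b = principal (p ^ e)" using less.prems(1) pZ peb by (intro principal_assoc) simp_all
    hence "lam (principal b) = principal (p ^ (m * e))" using lp by simp
    moreover have "gdvd b (p ^ (m * e))" using gdvd_trans[OF \<open>gdvd b (p ^ e)\<close> pe_pme] .
    ultimately show ?thesis using pmeZ LC pm_bm by (intro bexI[of _ "p ^ (m * e)"]) auto
  next
    case False
    have pe: "p ^ e \<in> ZI" "p ^ e \<noteq> 0" "\<not> gunit (p ^ e)" using gprime_pow[OF p(1) e1] by simp_all
    have "cmod b' < cmod b" using unit_mult_cmod[OF pe b0'] eb(2) by simp
    hence lt: "gn b' < gn b" using gn_less eb(1) less.prems(1) by blast
    have b'b: "gdvd b' b" using eb(2) pe(1) by simp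
    have b'a: "gdvd b' \<alpha>" using gdvd_trans[OF b'b less.prems(4)] .
    obtain g' where g': "g' \<in> ZI" "lam (principal b') = principal g'" "\<forall>k. gdvd g' (c k)"
       "\<exists>N. gdvd g' (b' ^ N)" "gdvd b' g'"
      using less.hyps[OF lt eb(1) b0' False b'a] by blast
    obtain N where N: "gdvd g' (b' ^ N)" using g'(4) by blast
    have npg: "\<not> gdvd p g'"
    proof
      assume "gdvd p g'"
      hence "gdvd p (b' ^ N)" using gdvd_trans[OF _ N] by blast
      thus False using prime_not_dvd_pow[OF p(1) eb(1) eb(3)] by blast
    qed
    have nz1: "nzp_ideal (principal (p ^ e))" using pe by (simp add: nzp_principal)
    have nz2: "nzp_ideal (principal b')" using eb(1) b0' False by (simp add: nzp_principal)
    have "principal b = ideal_mult (principal (p ^ e)) (principal b')"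
      using eb pe by (simp add: ideal_mult_principal)
    hence "lam (principal b) = ideal_mult (lam (principal (p ^ e))) (lam (principal b'))"
      using lam_mult[OF nz1 nz2] by simp
    also have "\<dots> = principal (p ^ (m * e) * g')" using lp g'(2) pmeZ g'(1) by (simp add: ideal_mult_principal)
    finally have L: "lam (principal b) = principal (p ^ (m * e) * g')" .
    have D1: "\<forall>k. gdvd (p ^ (m * e) * g') (c k)"
      using coprime_mult_dvd[OF p(1) g'(1) npg LC] g'(3) by blast
    have "gdvd (b' ^ N) (b ^ N)" using b'b by (rule gdvd_power_mono)
    hence "gdvd g' (b ^ N)" using gdvd_trans[OF N] by blast
    hence "gdvd (p ^ (m * e) * g') (b ^ m * b ^ N)" using pm_bm by (intro gdvd_mult_mono)
    hence D2: "gdvd (p ^ (m * e) * g') (b ^ (m + N))" by (simp add: power_add)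
    have D3: "gdvd b (p ^ (m * e) * g')" unfolding eb(2) using pe_pme g'(5) by (rule gdvd_mult_mono)
    show ?thesis using L D1 D2 D3 pmeZ g'(1) by (intro bexI[of _ "p ^ (m * e) * g'"]) auto
  qed
qed

lemma gamma_props: "\<And>k. gdvd \<gamma> (c k)" "gdvd \<alpha> \<gamma>"
proof -
  obtain g where g: "g \<in> ZI" "lam A = principal g" "\<forall>k. gdvd g (c k)" "gdvd \<alpha> g"
    using claim[OF \<alpha>(1) \<alpha>_nz \<alpha>_nu gdvd_refl] \<alpha>(2) by blast
  have "gdvd \<gamma> g \<and> gdvd g \<gamma>" using principal_eqD[OF \<gamma>(1) g(1)] \<gamma>(2) g(2) by simp
  thus "\<And>k. gdvd \<gamma> (c k)" "gdvd \<alpha> \<gamma>" using g gdvd_trans[of \<gamma> g] gdvd_trans[of \<alpha> g \<gamma>] by blast+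
qed

end



context setting begin

lemma local_root: assumes p: "gprime p" and E: "1 \<le> E"
  shows "\<exists>z\<in>ZI. gdvd (p ^ E) (poly q (r + \<alpha> * z))"
proof -
  have pZ: "p \<in> ZI" using p by (simp add: gprime_def)
  obtain e u where eu: "u \<in> ZI" "\<alpha> = p ^ e * u" "\<not> gdvd p u"
    using decompose[OF p \<alpha>(1) \<alpha>_nz] by blast
  define N where "N = E + e"
  have N1: "1 \<le> N" "e \<le> N" using E by (auto simp: N_def)
  define t where "t = s (principal p) N"
  have tZ: "t \<in> ZI" using s_ZI[OF p N1(1)] by (simp add: t_def)
  have pea: "gdvd (p ^ e) \<alpha>" using eu(1,2) by simp
  have "gdvd (p ^ e) (r - t)" using r_close[OF p pea N1(2) N1(1)] by (simp add: t_def)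
  then obtain w0 where w0: "w0 \<in> ZI" "r - t = p ^ e * w0" by (auto simp: gdvd_def)
  obtain u' v where uv: "u' \<in> ZI" "v \<in> ZI" "u' * p ^ E + v * u = 1" using bezout_pow[OF p eu(1) eu(3)] by blast
  define z where "z = v * (- w0)"
  have zZ: "z \<in> ZI" using uv w0 by (simp add: z_def)
  have vu: "v * u = 1 - u' * p ^ E" using uv(3) by (simp add: algebra_simps)
  have "\<alpha> * z = - (p ^ e * w0) * (v * u)" by (simp add: eu(2) z_def algebra_simps)
  also have "\<dots> = - (p ^ e * w0) + u' * w0 * (p ^ e * p ^ E)" unfolding vu by (simp add: algebra_simps)
  also have "p ^ e * p ^ E = p ^ N" by (simp add: N_def power_add[symmetric] add.commute)
  finally have az: "\<alpha> * z = - (p ^ e * w0) + u' * w0 * p ^ N" .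
  have "r + \<alpha> * z - t = (r - t) - p ^ e * w0 + u' * w0 * p ^ N" by (simp add: az algebra_simps)
  also have "\<dots> = u' * w0 * p ^ N" by (simp add: w0(2))
  finally have "r + \<alpha> * z - t = (u' * w0) * p ^ N" by simp
  hence "gdvd (p ^ N) (r + \<alpha> * z - t)" using uv(1) w0(1) by simp
  moreover have "gdvd (p ^ E) (p ^ N)" using pZ by (intro gdvd_pow_le) (auto simp: N_def)
  ultimately have d1: "gdvd (p ^ E) (r + \<alpha> * z - t)" using gdvd_trans[of "p ^ E" "p ^ N"] by blast
  have xZ: "r + \<alpha> * z \<in> ZI" using r(1) \<alpha>(1) zZ by simp
  have d2: "gdvd (p ^ E) (poly q (r + \<alpha> * z) - poly q t)" by (rule poly_cong[OF ZIq xZ tZ d1])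
  have "gdvd (p ^ N) (poly q t)" using s_root[OF p N1(1)] by (simp add: t_def)
  hence d3: "gdvd (p ^ E) (poly q t)" using gdvd_trans[OF \<open>gdvd (p ^ E) (p ^ N)\<close>] by blast
  have "gdvd (p ^ E) ((poly q (r + \<alpha> * z) - poly q t) + poly q t)" using d2 d3 by (rule gdvd_add)
  thus ?thesis using zZ by auto
qed

lemma global_root: "x \<in> ZI \<Longrightarrow> x \<noteq> 0 \<Longrightarrow> \<exists>z\<in>ZI. gdvd x (poly q (r + \<alpha> * z))"
proof (induction "gn x" arbitrary: x rule: less_induct)
  case less
  show ?case
  proof (cases "gunit x")
    case True
    have "poly q (r + \<alpha> * 0) \<in> ZI" using ZI_poly_poly[OF ZIq r(1)] by simp
    hence "gdvd x (poly q (r + \<alpha> * 0))" using gdvd_unit[OF True] by blast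
    thus ?thesis using ZI_0 by blast
  next
    case False
    obtain p where p: "gprime p" "gdvd p x" using exists_prime_divisor[OF less.prems False] by blast
    have pZ: "p \<in> ZI" using p by (simp add: gprime_def)
    obtain E x' where ex: "x' \<in> ZI" "x = p ^ E * x'" "\<not> gdvd p x'"
      using decompose[OF p(1) less.prems] by blast
    have E1: "1 \<le> E"
    proof (rule ccontr)
      assume "\<not> 1 \<le> E" hence "E = 0" by simp
      hence "x = x'" using ex(2) by simp
      thus False using ex(3) p(2) by simp
    qed
    obtain z1 where z1: "z1 \<in> ZI" "gdvd (p ^ E) (poly q (r + \<alpha> * z1))" using local_root[OF p(1) E1] by blast
    have pe: "p ^ E \<in> ZI" "p ^ E \<noteq> 0" "\<not> gunit (p ^ E)" using gprime_pow[OF p(1) E1] by simp_all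
    have x0': "x' \<noteq> 0" using ex less.prems(2) by auto
    show ?thesis
    proof (cases "gunit x'")
      case True
      then obtain w where w: "w \<in> ZI" "1 = x' * w" by (auto simp: gunit_def gdvd_def)
      have "p ^ E = p ^ E * (x' * w)" by (simp add: w(2)[symmetric])
      also have "\<dots> = x * w" by (simp add: ex(2) mult.assoc)
      finally have "gdvd x (p ^ E)" using w(1) by simp
      thus ?thesis using z1 gdvd_trans[of x "p ^ E"] by blast
    next
      case False
      have "cmod x' < cmod x" using unit_mult_cmod[OF pe x0'] ex(2) by simp
      hence lt: "gn x' < gn x" using gn_less ex(1) less.prems(1) by blast
      obtain z2 where z2: "z2 \<in> ZI" "gdvd x' (poly q (r + \<alpha> * z2))" using less.hyps[OF lt ex(1) x0'] by blast
      obtain u1 v1 where uv: "u1 \<in> ZI" "v1 \<in> ZI" "u1 * p ^ E + v1 * x' = 1" using bezout_pow[OF p(1) ex(1) ex(3)] by blast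
      define z where "z = z1 + (z2 - z1) * u1 * p ^ E"
      have zZ: "z \<in> ZI" using z1 z2 uv pZ by (simp add: z_def)
      have xZ: "r + \<alpha> * z \<in> ZI" using r(1) \<alpha>(1) zZ by simp
      have x1Z: "r + \<alpha> * z1 \<in> ZI" using r(1) \<alpha>(1) z1 by simp
      have x2Z: "r + \<alpha> * z2 \<in> ZI" using r(1) \<alpha>(1) z2 by simp
      have "(r + \<alpha> * z) - (r + \<alpha> * z1) = (\<alpha> * (z2 - z1) * u1) * p ^ E" by (simp add: z_def algebra_simps)
      hence "gdvd (p ^ E) ((r + \<alpha> * z) - (r + \<alpha> * z1))" using \<alpha>(1) z1 z2 uv by simp
      hence "gdvd (p ^ E) (poly q (r + \<alpha> * z) - poly q (r + \<alpha> * z1))" by (rule poly_cong[OF ZIq xZ x1Z])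
      hence "gdvd (p ^ E) ((poly q (r + \<alpha> * z) - poly q (r + \<alpha> * z1)) + poly q (r + \<alpha> * z1))"
        using z1(2) by (rule gdvd_add)
      hence D1: "gdvd (p ^ E) (poly q (r + \<alpha> * z))" by simp
      have "u1 * p ^ E = 1 - v1 * x'" using uv(3) by (simp add: algebra_simps)
      hence "(r + \<alpha> * z) - (r + \<alpha> * z2) = \<alpha> * (z1 - z2) * (1 - u1 * p ^ E)"
        by (simp add: z_def algebra_simps)
      also have h: "1 - u1 * p ^ E = v1 * x'" using uv(3) by (simp add: algebra_simps)
      also have "\<alpha> * (z1 - z2) * (v1 * x') = (\<alpha> * (z1 - z2) * v1) * x'" by (simp add: algebra_simps)
      finally have "gdvd x' ((r + \<alpha> * z) - (r + \<alpha> * z2))" using \<alpha>(1) z1 z2 uv by simp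
      hence "gdvd x' (poly q (r + \<alpha> * z) - poly q (r + \<alpha> * z2))" by (rule poly_cong[OF ZIq xZ x2Z])
      hence "gdvd x' ((poly q (r + \<alpha> * z) - poly q (r + \<alpha> * z2)) + poly q (r + \<alpha> * z2))"
        using z2(2) by (rule gdvd_add)
      hence D2: "gdvd x' (poly q (r + \<alpha> * z))" by simp
      have "gdvd (p ^ E * x') (poly q (r + \<alpha> * z))" using coprime_mult_dvd[OF p(1) ex(1) ex(3) D1 D2] .
      thus ?thesis using zZ ex(2) by auto
    qed
  qed
qed

end



lemma choose_pow2_le: "(i choose k) * 2 ^ (i - k) \<le> (3::nat) ^ i"
proof (cases "k \<le> i")
  case False hence "i choose k = 0" by simp
  thus ?thesis by (subst \<open>i choose k = 0\<close>) simp
next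
  case True
  have h3: "(1 + 2::nat) = 3" by simp
  have "(3::nat) ^ i = (1 + 2) ^ i" by (simp only: h3)
  also have "\<dots> = (\<Sum>j\<le>i. of_nat (i choose j) * 1 ^ j * 2 ^ (i - j))" by (rule binomial)
  also have "\<dots> = (\<Sum>j\<le>i. (i choose j) * 2 ^ (i - j))" by simp
  finally have eq: "(3::nat) ^ i = (\<Sum>j\<le>i. (i choose j) * 2 ^ (i - j))" .
  have "(i choose k) * 2 ^ (i - k) \<le> (\<Sum>j\<le>i. (i choose j) * 2 ^ (i - j))"
    using True by (intro member_le_sum) auto
  thus ?thesis using eq by simp
qed

lemma sum_pow3_le: "(\<Sum>i\<le>d. (3::nat) ^ i) \<le> 4 ^ d"
proof (induction d)
  case 0 thus ?case by simp
next
  case (Suc d)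
  have "(3::nat) ^ Suc d \<le> 3 * 4 ^ d" using power_mono[of "3::nat" 4 d] by simp
  thus ?case using Suc by simp
qed

lemma sum_choose_le: "(\<Sum>i\<le>d. real (i choose k) * 2 ^ (i - k)) \<le> 4 ^ d"
proof -
  have "(\<Sum>i\<le>d. (i choose k) * 2 ^ (i - k)) \<le> (\<Sum>i\<le>d. (3::nat) ^ i)"
    by (intro sum_mono choose_pow2_le)
  also have "\<dots> \<le> 4 ^ d" by (rule sum_pow3_le)
  finally have "real (\<Sum>i\<le>d. (i choose k) * 2 ^ (i - k)) \<le> real (4 ^ d)" by (simp only: of_nat_le_iff)
  thus ?thesis by simp
qed

context setting begin

definition MQ :: real where "MQ = Max ((\<lambda>i. cmod (coeff q i)) ` {..d})"

lemma MQ_ge: "i \<le> d \<Longrightarrow> cmod (coeff q i) \<le> MQ"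
  unfolding MQ_def by (intro Max_ge) auto

lemma MQ_nonneg: "0 \<le> MQ" using MQ_ge[of 0] by (meson norm_ge_zero order_trans zero_le)

lemma alpha_ge1: "1 \<le> cmod \<alpha>" using ZI_norm_ge1[OF \<alpha>(1) \<alpha>_nz] .

lemma c_bound: "cmod (c k) \<le> MQ * cmod \<alpha> ^ d * 4 ^ d"
proof -
  have "c k = (\<Sum>i\<le>d. coeff q i * (of_nat (i choose k) * \<alpha> ^ k * r ^ (i - k)))"
    unfolding c_def by (simp add: coeff_pcomp_lin q_deg)
  hence "cmod (c k) \<le> (\<Sum>i\<le>d. cmod (coeff q i * (of_nat (i choose k) * \<alpha> ^ k * r ^ (i - k))))"
    by (simp add: norm_sum)
  also have "\<dots> \<le> (\<Sum>i\<le>d. MQ * cmod \<alpha> ^ d * (real (i choose k) * 2 ^ (i - k)))"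
  proof (intro sum_mono)
    fix i assume i: "i \<in> {..d}"
    show "cmod (coeff q i * (of_nat (i choose k) * \<alpha> ^ k * r ^ (i - k))) \<le> MQ * cmod \<alpha> ^ d * (real (i choose k) * 2 ^ (i - k))"
    proof (cases "k \<le> i")
      case False hence "i choose k = 0" by simp
      thus ?thesis by (subst \<open>i choose k = 0\<close>)+ simp
    next
      case True
      have eq: "cmod (coeff q i * (of_nat (i choose k) * \<alpha> ^ k * r ^ (i - k))) =
          cmod (coeff q i) * (real (i choose k) * (cmod \<alpha> ^ k * cmod r ^ (i - k)))"
        by (simp add: norm_mult norm_power)
      have "cmod r ^ (i - k) \<le> (2 * cmod \<alpha>) ^ (i - k)" using r(2) by (intro power_mono) auto
      hence "cmod \<alpha> ^ k * cmod r ^ (i - k) \<le> cmod \<alpha> ^ k * (2 * cmod \<alpha>) ^ (i - k)"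
        by (intro mult_left_mono) auto
      also have "\<dots> = 2 ^ (i - k) * cmod \<alpha> ^ i"
        using True by (simp add: power_mult_distrib power_add[symmetric])
      also have "\<dots> \<le> 2 ^ (i - k) * cmod \<alpha> ^ d"
        using alpha_ge1 i by (intro mult_left_mono power_increasing) auto
      finally have 1: "cmod \<alpha> ^ k * cmod r ^ (i - k) \<le> 2 ^ (i - k) * cmod \<alpha> ^ d" .
      have 2: "real (i choose k) * (cmod \<alpha> ^ k * cmod r ^ (i - k)) \<le> real (i choose k) * (2 ^ (i - k) * cmod \<alpha> ^ d)"
        by (rule mult_left_mono[OF 1]) simp
      have "cmod (coeff q i) * (real (i choose k) * (cmod \<alpha> ^ k * cmod r ^ (i - k)))
          \<le> MQ * (real (i choose k) * (2 ^ (i - k) * cmod \<alpha> ^ d))"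
        using MQ_ge[of i] i 2 MQ_nonneg by (rule_tac mult_mono) auto
      thus ?thesis using eq by (simp add: mult_ac)
    qed
  qed
  also have "\<dots> = MQ * cmod \<alpha> ^ d * (\<Sum>i\<le>d. real (i choose k) * 2 ^ (i - k))"
    by (simp add: sum_distrib_left)
  also have "\<dots> \<le> MQ * cmod \<alpha> ^ d * 4 ^ d"
    using sum_choose_le MQ_nonneg by (intro mult_left_mono) auto
  finally show ?thesis .
qed

lemma qa_coeff_bound: "cmod (c k) / cmod \<gamma> \<le> 4 ^ d * cmod \<alpha> ^ (d - 1) * MQ"
proof -
  have ag: "cmod \<alpha> \<le> cmod \<gamma>" using gdvd_cmod[OF \<gamma>_nz gamma_props(2)] .
  have g0: "0 < cmod \<gamma>" using \<gamma>_nz by simp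
  have ad: "cmod \<alpha> ^ d \<le> cmod \<alpha> ^ (d - 1) * cmod \<alpha>"
  proof (cases d)
    case 0 thus ?thesis using alpha_ge1 by simp
  next
    case (Suc n) thus ?thesis by (simp add: mult.commute)
  qed
  have "cmod (c k) \<le> MQ * cmod \<alpha> ^ d * 4 ^ d" by (rule c_bound)
  also have "\<dots> \<le> MQ * (cmod \<alpha> ^ (d - 1) * cmod \<gamma>) * 4 ^ d"
  proof -
    have "cmod \<alpha> ^ d \<le> cmod \<alpha> ^ (d - 1) * cmod \<gamma>"
      using ad ag by (meson mult_left_mono norm_ge_zero order_trans zero_le_power)
    thus ?thesis using MQ_nonneg by (intro mult_right_mono mult_left_mono) auto
  qed
  finally have "cmod (c k) \<le> (4 ^ d * cmod \<alpha> ^ (d - 1) * MQ) * cmod \<gamma>" by (simp add: mult_ac)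
  thus ?thesis using g0 by (simp add: divide_le_eq)
qed

end



context setting begin

lemma final: "(\<forall>k. coeff (pcompose q [:r, \<alpha>:]) k \<in> lam A) \<and>
         (let qa = smult (1 / \<gamma>) (pcompose q [:r, \<alpha>:]) in
            intersective qa \<and> degree qa = d \<and>
            Mp qa \<le> 2 ^ (2 * d) * cmod \<alpha> ^ (d - 1) * Mp q)"
proof -
  define qa where "qa = smult (1 / \<gamma>) (pcompose q [:r, \<alpha>:])"
  have G1: "\<forall>k. coeff (pcompose q [:r, \<alpha>:]) k \<in> lam A"
    using gamma_props(1) \<gamma>(2) by (simp add: c_def mem_principal)
  have cq: "coeff qa k = c k / \<gamma>" for k by (simp add: qa_def c_def)
  have ZIqa: "ZI_poly qa" unfolding ZI_poly_def
  proof
    fix k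
    obtain t where t: "t \<in> ZI" "c k = \<gamma> * t" using gamma_props(1)[of k] by (auto simp: gdvd_def)
    thus "coeff qa k \<in> ZI" using \<gamma>_nz by (simp add: cq)
  qed
  have pqa: "poly qa z = poly q (r + \<alpha> * z) / \<gamma>" for z
    by (simp add: qa_def poly_pcompose mult.commute)
  have roots_qa: "\<exists>z\<in>ZI. gdvd a (poly qa z)" if a: "a \<in> ZI" "a \<noteq> 0" for a
  proof -
    have "a * \<gamma> \<in> ZI" "a * \<gamma> \<noteq> 0" using a \<gamma>(1) \<gamma>_nz by simp_all
    then obtain z where z: "z \<in> ZI" "gdvd (a * \<gamma>) (poly q (r + \<alpha> * z))" using global_root by blast
    then obtain t where t: "t \<in> ZI" "poly q (r + \<alpha> * z) = a * \<gamma> * t" by (auto simp: gdvd_def)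
    have "poly qa z = a * t" using \<gamma>_nz by (simp add: pqa t(2))
    hence "gdvd a (poly qa z)" using t(1) by simp
    thus ?thesis using z(1) by blast
  qed
  have int: "intersective qa" unfolding intersective_def using ZIqa roots_qa by blast
  have deg: "degree qa = d" using \<gamma>_nz \<alpha>_nz by (simp add: qa_def degree_pcompose q_deg)
  have "Mp qa = 2 * Max ((\<lambda>i. cmod (coeff qa i)) ` {..d})" by (simp add: Mp_def deg)
  also have "Max ((\<lambda>i. cmod (coeff qa i)) ` {..d}) \<le> 4 ^ d * cmod \<alpha> ^ (d - 1) * MQ"
    using qa_coeff_bound by (subst Max_le_iff) (auto simp: cq norm_divide)
  hence "2 * Max ((\<lambda>i. cmod (coeff qa i)) ` {..d}) \<le> 2 * (4 ^ d * cmod \<alpha> ^ (d - 1) * MQ)" by simp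
  also have "\<dots> = 2 ^ (2 * d) * cmod \<alpha> ^ (d - 1) * Mp q"
    by (simp add: Mp_def q_deg MQ_def power_mult)
  finally have "Mp qa \<le> 2 ^ (2 * d) * cmod \<alpha> ^ (d - 1) * Mp q" .
  thus ?thesis using G1 int deg unfolding Let_def qa_def by blast
qed

end

theorem mainTheorem9:
  fixes q :: "complex poly" and d :: nat
    and s :: "complex set \<Rightarrow> nat \<Rightarrow> complex"
    and lam :: "complex set \<Rightarrow> complex set"
    and A :: "complex set" and \<alpha> \<gamma> r :: complex
  assumes q_int: "intersective q" and q_nz: "q \<noteq> 0" and q_deg: "degree q = d"
    and roots: "\<And>P. nz_prime_ideal P \<Longrightarrow> padic_root q P (s P)"
    and lam_maps: "\<And>I. nzp_ideal I \<Longrightarrow> nzp_ideal (lam I)"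
    and lam_mult: "\<And>I J. nzp_ideal I \<Longrightarrow> nzp_ideal J \<Longrightarrow>
                      lam (ideal_mult I J) = ideal_mult (lam I) (lam J)"
    and lam_prime: "\<And>P. nz_prime_ideal P \<Longrightarrow> lam P = ideal_pow P (root_mult q P (s P))"
    and A_ideal: "nzp_ideal A" and \<alpha>: "\<alpha> \<in> ZI" "A = principal \<alpha>"
    and \<gamma>: "\<gamma> \<in> ZI" "lam A = principal \<gamma>"
    and r: "r \<in> ZI" "cmod r \<le> 2 * cmod \<alpha>" "poly q r \<in> A"
    and r_cong: "\<And>P n. nz_prime_ideal P \<Longrightarrow> n \<ge> 1 \<Longrightarrow> A \<subseteq> ideal_pow P n \<Longrightarrow>
                    r - s P n \<in> ideal_pow P n"
  shows "(\<forall>k. coeff (pcompose q [:r, \<alpha>:]) k \<in> lam A) \<and>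
         (let qa = smult (1 / \<gamma>) (pcompose q [:r, \<alpha>:]) in
            intersective qa \<and> degree qa = d \<and>
            Mp qa \<le> 2 ^ (2 * d) * cmod \<alpha> ^ (d - 1) * Mp q)"
proof -
  interpret S: setting q d s lam A \<alpha> \<gamma> r
    by (rule setting.intro) (fact assms)+
  show ?thesis by (rule S.final)
qed

end
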